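(* Let $A$ be the symmetric circulant $5\times5$ matrix with first row $(8,5,1,1,5)$ (i.e. $a_{ii}=8$, $a_{ij}=5$ if $j\equiv i\pm1 \pmod 5$, $a_{ij}=1$ otherwise), and let $A'$ be the symmetric circulant $5\times 5$ matrix with first row $(6,4,1,1,4)$. Then $A$ is completely positive, has exactly two minimal CP factorizations, and has infinitely many CP factorizations; and $A'$ is completely positive with the unique CP factorization $A'=W^2(W^2)^T$, where $W$ is the $5\times5$ matrix whose $i$-th column is $\mathbf e_i+\mathbf e_{i\oplus1}$ ($\oplus$ denoting addition modulo $5$ on $\{1,\dots,5\}$), so that $W^2$ is the circulant matrix with first row $(1,0,0,1,2)$.
   Context: A symmetric $n\times n$ matrix $A$ is completely positive if $A=BB^T$ for some entrywise nonnegative $n\times k$ matrix $B$; such an equality is a CP factorization of $A$. Only CP factorizations in which the columns of $B$ are pairwise linearly independent are considered, and two CP factorizations $A=BB^T=CC^T$ are considered equal if $C=BP$ for a permutation matrix $P$. The cp-rank of $A$ is the minimal number of columns of such a nonnegative $B$; a CP factorization with that many columns is called minimal. $\mathbf e_1,\dots,\mathbf e_5$ are the standard basis vectors of $\mathbb R^5$. *)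

theory Defs
  imports Main "HOL-Combinatorics.Permutations" Complex_Main
begin

text \<open>Matrices are represented as functions nat => nat => real; an n x k matrix
  is indexed by rows 0..n-1 and columns 0..k-1 (0-based indices).\<close>

definition nonneg_mat :: "nat \<Rightarrow> nat \<Rightarrow> (nat \<Rightarrow> nat \<Rightarrow> real) \<Rightarrow> bool" where
  "nonneg_mat n k B \<longleftrightarrow> (\<forall>i<n. \<forall>j<k. B i j \<ge> 0)"

definition is_BBT :: "nat \<Rightarrow> (nat \<Rightarrow> nat \<Rightarrow> real) \<Rightarrow> nat \<Rightarrow> (nat \<Rightarrow> nat \<Rightarrow> real) \<Rightarrow> bool" where
  "is_BBT n A k B \<longleftrightarrow> (\<forall>i<n. \<forall>j<n. A i j = (\<Sum>l<k. B i l * B j l))"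

definition completely_positive :: "nat \<Rightarrow> (nat \<Rightarrow> nat \<Rightarrow> real) \<Rightarrow> bool" where
  "completely_positive n A \<longleftrightarrow>
     (\<forall>i<n. \<forall>j<n. A i j = A j i) \<and> (\<exists>k B. nonneg_mat n k B \<and> is_BBT n A k B)"

definition cp_rank :: "nat \<Rightarrow> (nat \<Rightarrow> nat \<Rightarrow> real) \<Rightarrow> nat" where
  "cp_rank n A = (LEAST k. \<exists>B. nonneg_mat n k B \<and> is_BBT n A k B)"

definition cols_lin_indep :: "nat \<Rightarrow> (nat \<Rightarrow> nat \<Rightarrow> real) \<Rightarrow> nat \<Rightarrow> nat \<Rightarrow> bool" where
  "cols_lin_indep n B j j' \<longleftrightarrow>
     (\<forall>a b. (\<forall>i<n. a * B i j + b * B i j' = 0) \<longrightarrow> a = 0 \<and> b = 0)"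

definition cp_factorizations :: "nat \<Rightarrow> (nat \<Rightarrow> nat \<Rightarrow> real) \<Rightarrow> (nat \<times> (nat \<Rightarrow> nat \<Rightarrow> real)) set" where
  "cp_factorizations n A = {(k, B). nonneg_mat n k B \<and> is_BBT n A k B \<and>
      (\<forall>j<k. \<forall>j'<k. j \<noteq> j' \<longrightarrow> cols_lin_indep n B j j') \<and>
      (\<forall>i j. \<not> (i < n \<and> j < k) \<longrightarrow> B i j = 0)}"

definition minimal_cp_factorizations :: "nat \<Rightarrow> (nat \<Rightarrow> nat \<Rightarrow> real) \<Rightarrow> (nat \<times> (nat \<Rightarrow> nat \<Rightarrow> real)) set" where
  "minimal_cp_factorizations n A = {(k, B) \<in> cp_factorizations n A. k = cp_rank n A}"

definition cp_equiv :: "nat \<Rightarrow> ((nat \<times> (nat \<Rightarrow> nat \<Rightarrow> real)) \<times> (nat \<times> (nat \<Rightarrow> nat \<Rightarrow> real))) set" where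
  "cp_equiv n = {((k, B), (k', C)). k = k' \<and>
      (\<exists>p. p permutes {..<k} \<and> (\<forall>i<n. \<forall>j<k. C i j = B i (p j)))}"

text \<open>Symmetric circulant 5 x 5 matrix with first row (d, a, b, b, a).\<close>
definition circ5 :: "real \<Rightarrow> real \<Rightarrow> real \<Rightarrow> nat \<Rightarrow> nat \<Rightarrow> real" where
  "circ5 d a b i j = (if i < 5 \<and> j < 5 then
      (if i = j then d else if j = (i + 1) mod 5 \<or> i = (j + 1) mod 5 then a else b)
    else 0)"

definition W5 :: "nat \<Rightarrow> nat \<Rightarrow> real" where
  "W5 i j = (if i < 5 \<and> j < 5 \<and> (i = j \<or> i = (j + 1) mod 5) then 1 else 0)"

definition W5sq :: "nat \<Rightarrow> nat \<Rightarrow> real" where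
  "W5sq i j = (if i < 5 \<and> j < 5 then (\<Sum>l<5. W5 i l * W5 l j) else 0)"

end

theory Submission imports Defs begin
definition win :: "nat \<Rightarrow> real \<Rightarrow> real \<Rightarrow> nat \<Rightarrow> real" where
 "win w s t i = (if i = w then s else if i = Suc w mod 5 then s + t
     else if i = Suc (Suc w) mod 5 then t else 0)"

lemma less5_cases: "(i::nat) < 5 \<Longrightarrow> i = 0 \<or> i = 1 \<or> i = 2 \<or> i = 3 \<or> i = 4" by auto

lemma sum5: "(\<Sum>i<5::nat. f i) = f 0 + f 1 + f 2 + f 3 + (f 4::real)"
  by (simp add: eval_nat_numeral)

lemma win_vals: "win 0 s t 0 = s" "win 0 s t 1 = s+t" "win 0 s t 2 = t" "win 0 s t 3 = 0" "win 0 s t 4 = 0"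
  "win 1 s t 0 = 0" "win 1 s t 1 = s" "win 1 s t 2 = s+t" "win 1 s t 3 = t" "win 1 s t 4 = 0"
  "win 2 s t 0 = 0" "win 2 s t 1 = 0" "win 2 s t 2 = s" "win 2 s t 3 = s+t" "win 2 s t 4 = t"
  "win 3 s t 0 = t" "win 3 s t 1 = 0" "win 3 s t 2 = 0" "win 3 s t 3 = s" "win 3 s t 4 = s+t"
  "win 4 s t 0 = s+t" "win 4 s t 1 = t" "win 4 s t 2 = 0" "win 4 s t 3 = 0" "win 4 s t 4 = s"
  by (simp_all add: win_def)

lemma win_scale: "c * win w s t i = win w (c*s) (c*t) i"
  by (simp add: win_def distrib_left)

lemma win_cross: assumes "w < 5" "w' < 5" "w \<noteq> w'" shows "win w s t w' * win w' s' t' w = 0"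
  using less5_cases[OF assms(1)] less5_cases[OF assms(2)] assms(3) by (elim disjE; simp add: win_def)

lemma win_prod2: assumes "w < 5" "i < 5" shows
   "win w s t i * win w s t ((i+2) mod 5) = (if w = i then s*t else 0)"
  using less5_cases[OF assms(1)] less5_cases[OF assms(2)] by (elim disjE; simp add: win_def)

lemma win_sum1: assumes "w < 5" shows "(\<Sum>i<5. win w s t i * win w s t ((i+1) mod 5)) = (s+t)^2"
  using less5_cases[OF assms] by (elim disjE; simp add: sum5 win_def power2_eq_square algebra_simps)

lemma win_sum2: assumes "w < 5" shows "(\<Sum>i<5. win w s t i * win w s t ((i+2) mod 5)) = s*t"
  using less5_cases[OF assms] by (elim disjE; simp add: sum5 win_def)

lemma all5: "P 0 \<Longrightarrow> P 1 \<Longrightarrow> P 2 \<Longrightarrow> P 3 \<Longrightarrow> P 4 \<Longrightarrow> \<forall>i<(5::nat). P i"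
  by (metis less5_cases)

definition hq :: "(nat \<Rightarrow> real) \<Rightarrow> real" where
 "hq x = x 0 * x 0 + x 1 * x 1 + x 2 * x 2 + x 3 * x 3 + x 4 * x 4
   + 2*(x 0 * x 2 + x 1 * x 3 + x 2 * x 4 + x 3 * x 0 + x 4 * x 1)
   - 2*(x 0 * x 1 + x 1 * x 2 + x 2 * x 3 + x 3 * x 4 + x 4 * x 0)"

lemma hq_id1: "hq x = (x 0 - x 1 + x 2 + x 3 - x 4)^2 + 4*(x 1 * x 3) + 4*(x 2 * (x 4 - x 3))"
  by (simp add: hq_def power2_eq_square algebra_simps)
lemma hq_id2: "hq x = (x 0 - x 1 + x 2 - x 3 + x 4)^2 + 4*(x 1 * x 4) + 4*(x 0 * (x 3 - x 4))"
  by (simp add: hq_def power2_eq_square algebra_simps)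

lemma hq_nonneg: assumes nn: "\<forall>i<5. x i \<ge> 0" shows "hq x \<ge> 0"
proof -
  have n: "x 0 \<ge> 0" "x 1 \<ge> 0" "x 2 \<ge> 0" "x 3 \<ge> 0" "x 4 \<ge> 0" using nn by auto
  show ?thesis
  proof (cases "x 3 \<le> x 4")
    case True
    have "x 1 * x 3 \<ge> 0" "x 2 * (x 4 - x 3) \<ge> 0" using n True by (intro mult_nonneg_nonneg; simp)+
    moreover have "(x 0 - x 1 + x 2 + x 3 - x 4)^2 \<ge> 0" by simp
    ultimately show ?thesis using hq_id1[of x] by linarith
  next
    case False
    have "x 1 * x 4 \<ge> 0" "x 0 * (x 3 - x 4) \<ge> 0" using n False by (intro mult_nonneg_nonneg; simp)+
    moreover have "(x 0 - x 1 + x 2 - x 3 + x 4)^2 \<ge> 0" by simp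
    ultimately show ?thesis using hq_id2[of x] by linarith
  qed
qed

lemma win_intro: "w < 5 \<Longrightarrow> s \<ge> 0 \<Longrightarrow> t \<ge> 0 \<Longrightarrow> (\<forall>i<5. x i = win w s t i)
  \<Longrightarrow> \<exists>w<5. \<exists>s\<ge>0. \<exists>t\<ge>0. \<forall>i<5. x i = win w s t i"
  by blast

lemma hq_zero:
  assumes nn: "\<forall>i<5. x i \<ge> 0" and z: "hq x = 0"
  shows "\<exists>w<5. \<exists>s\<ge>0. \<exists>t\<ge>0. \<forall>i<5. x i = win w s t i"
proof -
  have n: "x 0 \<ge> 0" "x 1 \<ge> 0" "x 2 \<ge> 0" "x 3 \<ge> 0" "x 4 \<ge> 0" using nn by auto
  show ?thesis
  proof (cases "x 3 \<le> x 4")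
    case True
    have a: "(x 0 - x 1 + x 2 + x 3 - x 4)^2 \<ge> 0" by simp
    have b: "x 1 * x 3 \<ge> 0" "x 2 * (x 4 - x 3) \<ge> 0" using n True by (intro mult_nonneg_nonneg; simp)+
    have e: "(x 0 - x 1 + x 2 + x 3 - x 4)^2 = 0" "x 1 * x 3 = 0" "x 2 * (x 4 - x 3) = 0"
      using z hq_id1[of x] a b by linarith+
    hence lin: "x 0 - x 1 + x 2 + x 3 - x 4 = 0" by simp
    from e(2) have "x 1 = 0 \<or> x 3 = 0" by simp
    then show ?thesis
    proof
      assume h1: "x 1 = 0"
      have h2: "x 2 = 0"
      proof (rule ccontr)
        assume h: "x 2 \<noteq> 0"
        then have "x 4 = x 3" using e(3) by simp
        then show False using lin h1 n h by linarith
      qed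
      have W: "\<forall>i<5. x i = win 3 (x 3) (x 0) i"
        using h1 h2 lin by (intro all5) (simp_all add: win_def)
      show ?thesis using win_intro[OF _ _ _ W] n by simp
    next
      assume h3: "x 3 = 0"
      have "x 2 * x 4 = 0" using e(3) h3 by simp
      then have "x 2 = 0 \<or> x 4 = 0" by simp
      then show ?thesis
      proof
        assume h2: "x 2 = 0"
        have W: "\<forall>i<5. x i = win 4 (x 4) (x 1) i"
          using h2 h3 lin by (intro all5) (simp_all add: win_def)
        show ?thesis using win_intro[OF _ _ _ W] n by simp
      next
        assume h4: "x 4 = 0"
        have W: "\<forall>i<5. x i = win 0 (x 0) (x 2) i"
          using h4 h3 lin by (intro all5) (simp_all add: win_def)
        show ?thesis using win_intro[OF _ _ _ W] n by simp
      qed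
    qed
  next
    case False
    have a: "(x 0 - x 1 + x 2 - x 3 + x 4)^2 \<ge> 0" by simp
    have b: "x 1 * x 4 \<ge> 0" "x 0 * (x 3 - x 4) \<ge> 0" using n False by (intro mult_nonneg_nonneg; simp)+
    have e: "(x 0 - x 1 + x 2 - x 3 + x 4)^2 = 0" "x 1 * x 4 = 0" "x 0 * (x 3 - x 4) = 0"
      using z hq_id2[of x] a b by linarith+
    hence lin: "x 0 - x 1 + x 2 - x 3 + x 4 = 0" by simp
    from e(2) have "x 1 = 0 \<or> x 4 = 0" by simp
    then show ?thesis
    proof
      assume h1: "x 1 = 0"
      have h0: "x 0 = 0"
      proof (rule ccontr)
        assume h: "x 0 \<noteq> 0"
        then have "x 4 = x 3" using e(3) by simp
        then show False using lin h1 n h by linarith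
      qed
      have W: "\<forall>i<5. x i = win 2 (x 2) (x 4) i"
        using h1 h0 lin by (intro all5) (simp_all add: win_def)
      show ?thesis using win_intro[OF _ _ _ W] n by simp
    next
      assume h4: "x 4 = 0"
      have "x 0 * x 3 = 0" using e(3) h4 by simp
      then have "x 0 = 0 \<or> x 3 = 0" by simp
      then show ?thesis
      proof
        assume h0: "x 0 = 0"
        have W: "\<forall>i<5. x i = win 1 (x 1) (x 3) i"
          using h0 h4 lin by (intro all5) (simp_all add: win_def)
        show ?thesis using win_intro[OF _ _ _ W] n by simp
      next
        assume h3: "x 3 = 0"
        have W: "\<forall>i<5. x i = win 0 (x 0) (x 2) i"
          using h4 h3 lin by (intro all5) (simp_all add: win_def)
        show ?thesis using win_intro[OF _ _ _ W] n by simp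
      qed
    qed
  qed
qed


lemma hq_sum: assumes "is_BBT 5 A k B"
 shows "(\<Sum>l<k. hq (\<lambda>i. B i l)) = A 0 0 + A 1 1 + A 2 2 + A 3 3 + A 4 4
   + 2*(A 0 2 + A 1 3 + A 2 4 + A 3 0 + A 4 1) - 2*(A 0 1 + A 1 2 + A 2 3 + A 3 4 + A 4 0)"
proof -
  have e: "\<And>i j. i<5 \<Longrightarrow> j<5 \<Longrightarrow> A i j = (\<Sum>l<k. B i l * B j l)"
    using assms by (simp add: is_BBT_def)
  have "(\<Sum>l<k. hq (\<lambda>i. B i l)) = (\<Sum>l<k. B 0 l * B 0 l) + (\<Sum>l<k. B 1 l * B 1 l) + (\<Sum>l<k. B 2 l * B 2 l)
     + (\<Sum>l<k. B 3 l * B 3 l) + (\<Sum>l<k. B 4 l * B 4 l)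
   + 2*((\<Sum>l<k. B 0 l * B 2 l) + (\<Sum>l<k. B 1 l * B 3 l) + (\<Sum>l<k. B 2 l * B 4 l) + (\<Sum>l<k. B 3 l * B 0 l) + (\<Sum>l<k. B 4 l * B 1 l))
   - 2*((\<Sum>l<k. B 0 l * B 1 l) + (\<Sum>l<k. B 1 l * B 2 l) + (\<Sum>l<k. B 2 l * B 3 l) + (\<Sum>l<k. B 3 l * B 4 l) + (\<Sum>l<k. B 4 l * B 0 l))"
    unfolding hq_def by (simp only: sum.distrib sum_subtractf sum_distrib_left[symmetric])
  then show ?thesis by (simp add: e)
qed

definition windowed :: "nat \<Rightarrow> (nat\<Rightarrow>nat\<Rightarrow>real) \<Rightarrow> (nat\<Rightarrow>nat) \<Rightarrow> (nat\<Rightarrow>real) \<Rightarrow> (nat\<Rightarrow>real) \<Rightarrow> bool" where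
 "windowed k B w s t \<longleftrightarrow> (\<forall>l<k. w l < 5 \<and> s l \<ge> 0 \<and> t l \<ge> 0 \<and> (\<forall>i<5. B i l = win (w l) (s l) (t l) i))"

lemma horn_windows:
  assumes nn: "nonneg_mat 5 k B" and z: "(\<Sum>l<k. hq (\<lambda>i. B i l)) = 0"
  shows "\<exists>w s t. windowed k B w s t"
proof -
  have hn: "\<forall>l\<in>{..<k}. hq (\<lambda>i. B i l) \<ge> 0" using nn by (auto simp: nonneg_mat_def intro!: hq_nonneg)
  have h0: "\<forall>l\<in>{..<k}. hq (\<lambda>i. B i l) = 0"
    using sum_nonneg_eq_0_iff[of "{..<k}" "\<lambda>l. hq (\<lambda>i. B i l)"] hn z by simp
  have "\<forall>l\<in>{..<k}. \<exists>p. fst p < 5 \<and> fst (snd p) \<ge> 0 \<and> snd (snd p) \<ge> 0 \<and>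
      (\<forall>i<5. B i l = win (fst p) (fst (snd p)) (snd (snd p)) i)"
  proof
    fix l assume l: "l \<in> {..<k}"
    have "\<forall>i<5. B i l \<ge> 0" using l nn by (auto simp: nonneg_mat_def)
    then obtain w s t where "w<5" "s\<ge>0" "t\<ge>0" "\<forall>i<5. B i l = win w s t i"
      using hq_zero[of "\<lambda>i. B i l"] h0 l by blast
    then show "\<exists>p. fst p < 5 \<and> fst (snd p) \<ge> 0 \<and> snd (snd p) \<ge> 0 \<and>
      (\<forall>i<5. B i l = win (fst p) (fst (snd p)) (snd (snd p)) i)"
      by (intro exI[of _ "(w,s,t)"]) simp
  qed
  from bchoice[OF this] obtain f where f: "\<forall>l\<in>{..<k}. fst (f l) < 5 \<and> fst (snd (f l)) \<ge> 0 \<and> snd (snd (f l)) \<ge> 0 \<and>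
      (\<forall>i<5. B i l = win (fst (f l)) (fst (snd (f l))) (snd (snd (f l))) i)" by blast
  have "windowed k B (\<lambda>l. fst (f l)) (\<lambda>l. fst (snd (f l))) (\<lambda>l. snd (snd (f l)))"
    unfolding windowed_def using f by auto
  then show ?thesis by blast
qed

lemma P_sum: assumes "windowed k B w s t" "is_BBT 5 A k B" "i < 5"
  shows "A i ((i+2) mod 5) = (\<Sum>l<k. if w l = i then s l * t l else 0)"
proof -
  have "A i ((i+2) mod 5) = (\<Sum>l<k. B i l * B ((i+2) mod 5) l)"
    using assms(2,3) by (simp add: is_BBT_def)
  also have "\<dots> = (\<Sum>l<k. if w l = i then s l * t l else 0)"
  proof (rule sum.cong)
    fix l assume "l \<in> {..<k}"
    then have "w l < 5" "B i l = win (w l) (s l) (t l) i" "B ((i+2) mod 5) l = win (w l) (s l) (t l) ((i+2) mod 5)"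
      using assms(1,3) unfolding windowed_def by auto
    then show "B i l * B ((i+2) mod 5) l = (if w l = i then s l * t l else 0)"
      using win_prod2[OF _ assms(3)] by simp
  qed simp
  finally show ?thesis .
qed

lemma windows_hit: assumes "windowed k B w s t" "is_BBT 5 A k B" "i < 5" "A i ((i+2) mod 5) \<noteq> 0"
  shows "\<exists>l<k. w l = i"
proof (rule ccontr)
  assume "\<not> (\<exists>l<k. w l = i)"
  then have "(\<Sum>l<k. if w l = i then s l * t l else 0) = 0" by (intro sum.neutral) auto
  then show False using P_sum[OF assms(1-3)] assms(4) by simp
qed

lemma windows_all: assumes "windowed k B w s t" "is_BBT 5 A k B" "\<forall>i<5. A i ((i+2) mod 5) \<noteq> 0"
  shows "w ` {..<k} = {..<5}" "5 \<le> k"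
proof -
  have "w ` {..<k} \<subseteq> {..<5}" using assms(1) unfolding windowed_def by auto
  moreover have "{..<5} \<subseteq> w ` {..<k}" using windows_hit[OF assms(1,2)] assms(3) by blast
  ultimately show e: "w ` {..<k} = {..<5}" by blast
  have "card (w ` {..<k}) \<le> card {..<k}" by (rule card_image_le) simp
  then show "5 \<le> k" using e by simp
qed

lemma sum_swap_adj: assumes "windowed k B w s t" "is_BBT 5 A k B"
  shows "(\<Sum>i<5. A i ((i+1) mod 5)) = (\<Sum>l<k. (s l + t l)^2)"
    and "(\<Sum>i<5. A i ((i+2) mod 5)) = (\<Sum>l<k. s l * t l)"
proof -
  have "(\<Sum>i<5. A i ((i+1) mod 5)) = (\<Sum>i<5. \<Sum>l<k. B i l * B ((i+1) mod 5) l)"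
    using assms(2) by (intro sum.cong) (auto simp: is_BBT_def)
  also have "\<dots> = (\<Sum>l<k. \<Sum>i<5. B i l * B ((i+1) mod 5) l)" by (rule sum.swap)
  also have "\<dots> = (\<Sum>l<k. (s l + t l)^2)"
  proof (rule sum.cong)
    fix l assume l: "l \<in> {..<k}"
    then have w: "w l < 5" using assms(1) unfolding windowed_def by auto
    have "(\<Sum>i<5. B i l * B ((i+1) mod 5) l) = (\<Sum>i<5. win (w l) (s l) (t l) i * win (w l) (s l) (t l) ((i+1) mod 5))"
      using assms(1) l unfolding windowed_def by (intro sum.cong) auto
    then show "(\<Sum>i<5. B i l * B ((i+1) mod 5) l) = (s l + t l)^2" using win_sum1[OF w] by simp
  qed simp
  finally show "(\<Sum>i<5. A i ((i+1) mod 5)) = (\<Sum>l<k. (s l + t l)^2)" .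
  have "(\<Sum>i<5. A i ((i+2) mod 5)) = (\<Sum>i<5. \<Sum>l<k. B i l * B ((i+2) mod 5) l)"
    using assms(2) by (intro sum.cong) (auto simp: is_BBT_def)
  also have "\<dots> = (\<Sum>l<k. \<Sum>i<5. B i l * B ((i+2) mod 5) l)" by (rule sum.swap)
  also have "\<dots> = (\<Sum>l<k. s l * t l)"
  proof (rule sum.cong)
    fix l assume l: "l \<in> {..<k}"
    then have w: "w l < 5" using assms(1) unfolding windowed_def by auto
    have "(\<Sum>i<5. B i l * B ((i+2) mod 5) l) = (\<Sum>i<5. win (w l) (s l) (t l) i * win (w l) (s l) (t l) ((i+2) mod 5))"
      using assms(1) l unfolding windowed_def by (intro sum.cong) auto
    then show "(\<Sum>i<5. B i l * B ((i+2) mod 5) l) = s l * t l" using win_sum2[OF w] by simp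
  qed simp
  finally show "(\<Sum>i<5. A i ((i+2) mod 5)) = (\<Sum>l<k. s l * t l)" .
qed



lemma golden_u:
  fixes u v :: "nat \<Rightarrow> real"
  assumes pos: "u 0 > 0" "u 1 > 0" "u 2 > 0" "u 3 > 0" "u 4 > 0"
    and uv: "u 0 * v 0 = 1" "u 1 * v 1 = 1" "u 2 * v 2 = 1" "u 3 * v 3 = 1" "u 4 * v 4 = 1"
    and e: "u 1 + v 0 = 3" "u 2 + v 1 = 3" "u 3 + v 2 = 3" "u 4 + v 3 = 3" "u 0 + v 4 = 3"
  shows "u 0 ^ 2 - 3 * u 0 + 1 = 0" "u 1 = u 0" "u 2 = u 0" "u 3 = u 0" "u 4 = u 0"
proof -
  have a1: "u 1 * u 0 = 3 * u 0 - 1"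
  proof -
    have "(u 1 + v 0) * u 0 = 3 * u 0" using e(1) by simp
    then show ?thesis using uv(1) by (simp add: algebra_simps)
  qed
  have a2: "u 2 * (3 * u 0 - 1) = 8 * u 0 - 3"
  proof -
    have "(u 2 + v 1) * (u 1 * u 0) = 3 * (u 1 * u 0)" using e(2) by simp
    then have "u 2 * (u 1 * u 0) + (u 1 * v 1) * u 0 = 3 * (u 1 * u 0)" by (simp add: algebra_simps)
    then have "u 2 * (3 * u 0 - 1) + u 0 = 3 * (3 * u 0 - 1)" by (simp only: a1 uv(2) mult_1)
    then show ?thesis by (smt (verit))
  qed
  have a3: "u 3 * (8 * u 0 - 3) = 21 * u 0 - 8"
  proof -
    have "(u 3 + v 2) * (u 2 * (3 * u 0 - 1)) = 3 * (u 2 * (3 * u 0 - 1))" using e(3) by simp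
    then have "u 3 * (u 2 * (3 * u 0 - 1)) + (u 2 * v 2) * (3 * u 0 - 1) = 3 * (u 2 * (3 * u 0 - 1))" by (simp add: algebra_simps)
    then have "u 3 * (8 * u 0 - 3) + (3 * u 0 - 1) = 3 * (8 * u 0 - 3)" by (simp only: a2 uv(3) mult_1)
    then show ?thesis by (smt (verit))
  qed
  have a4: "u 4 * (21 * u 0 - 8) = 55 * u 0 - 21"
  proof -
    have "(u 4 + v 3) * (u 3 * (8 * u 0 - 3)) = 3 * (u 3 * (8 * u 0 - 3))" using e(4) by simp
    then have "u 4 * (u 3 * (8 * u 0 - 3)) + (u 3 * v 3) * (8 * u 0 - 3) = 3 * (u 3 * (8 * u 0 - 3))" by (simp add: algebra_simps)
    then have "u 4 * (21 * u 0 - 8) + (8 * u 0 - 3) = 3 * (21 * u 0 - 8)" by (simp only: a3 uv(4) mult_1)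
    then show ?thesis by (smt (verit))
  qed
  have a5: "u 0 * (55 * u 0 - 21) = 144 * u 0 - 55"
  proof -
    have "(u 0 + v 4) * (u 4 * (21 * u 0 - 8)) = 3 * (u 4 * (21 * u 0 - 8))" using e(5) by simp
    then have "u 0 * (u 4 * (21 * u 0 - 8)) + (u 4 * v 4) * (21 * u 0 - 8) = 3 * (u 4 * (21 * u 0 - 8))" by (simp add: algebra_simps)
    then have "u 0 * (55 * u 0 - 21) + (21 * u 0 - 8) = 3 * (55 * u 0 - 21)" by (simp only: a4 uv(5) mult_1)
    then show ?thesis by (smt (verit))
  qed
  show q: "u 0 ^ 2 - 3 * u 0 + 1 = 0" using a5 by (simp add: power2_eq_square algebra_simps)
  have step: "\<And>a b c::real. a > 0 \<Longrightarrow> a * b = 1 \<Longrightarrow> c + b = 3 \<Longrightarrow> a^2 - 3*a + 1 = 0 \<Longrightarrow> c = a"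
  proof -
    fix a b c :: real assume h: "a > 0" "a * b = 1" "c + b = 3" "a^2 - 3*a + 1 = 0"
    have "a * (3 - a) = 1" using h(4) by (simp add: power2_eq_square algebra_simps)
    then have "a * (3 - a) = a * b" using h(2) by simp
    then have "b = 3 - a" using h(1) by simp
    then show "c = a" using h(3) by simp
  qed
  show u1: "u 1 = u 0" using step[OF pos(1) uv(1) e(1) q] .
  have q1: "u 1 ^ 2 - 3 * u 1 + 1 = 0" using q u1 by simp
  show u2: "u 2 = u 0" using step[OF pos(2) uv(2) e(2) q1] u1 by simp
  have q2: "u 2 ^ 2 - 3 * u 2 + 1 = 0" using q u2 by simp
  show u3: "u 3 = u 0" using step[OF pos(3) uv(3) e(3) q2] u2 by simp
  have q3: "u 3 ^ 2 - 3 * u 3 + 1 = 0" using q u3 by simp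
  show u4: "u 4 = u 0" using step[OF pos(4) uv(4) e(4) q3] u3 by simp
qed


definition phi :: real where "phi = (1 + sqrt 5) / 2"
definition psi :: real where "psi = (sqrt 5 - 1) / 2"

lemma s5: "sqrt 5 * sqrt 5 = (5::real)" by simp
lemma s5_gt1: "sqrt 5 > (1::real)" by (simp add: real_less_rsqrt)
lemma phi_pos: "phi > 0" by (simp add: phi_def add_pos_nonneg)
lemma psi_pos: "psi > 0" using s5_gt1 by (simp add: psi_def)
lemma phi_psi: "phi * psi = 1"
  by (simp add: phi_def psi_def algebra_simps s5 field_simps)
lemma phi_sq: "phi^2 = (3 + sqrt 5)/2"
  by (simp add: phi_def power2_eq_square algebra_simps s5 field_simps)
lemma psi_sq: "psi^2 = (3 - sqrt 5)/2"
  by (simp add: psi_def power2_eq_square algebra_simps s5 field_simps)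
lemma phi_ne_psi: "phi \<noteq> psi" by (simp add: phi_def psi_def)
lemma phi_plus_psi: "phi + psi = sqrt 5" by (simp add: phi_def psi_def field_simps)

lemma quad_roots: fixes x :: real assumes "x^2 - 3*x + 1 = 0" shows "x = phi^2 \<or> x = psi^2"
proof -
  have "(x - phi^2) * (x - psi^2) = (x - (3 + sqrt 5)/2) * (x - (3 - sqrt 5)/2)"
    by (simp only: phi_sq psi_sq)
  also have "\<dots> = x^2 - 3*x + (9 - sqrt 5 * sqrt 5) / 4"
    by (simp add: power2_eq_square field_simps)
  also have "\<dots> = x^2 - 3*x + 1" by (simp only: s5) simp
  finally have "(x - phi^2) * (x - psi^2) = x^2 - 3*x + 1" .
  then have "(x - phi^2) * (x - psi^2) = 0" using assms by simp
  then show ?thesis by simp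
qed

lemma golden:
  fixes \<sigma> \<tau> :: "nat \<Rightarrow> real"
  assumes nn: "\<forall>j<5. \<sigma> j \<ge> 0 \<and> \<tau> j \<ge> 0" and p: "\<forall>j<5. \<sigma> j * \<tau> j = 1"
    and e: "\<sigma> 1^2 + \<tau> 0^2 = 3" "\<sigma> 2^2 + \<tau> 1^2 = 3" "\<sigma> 3^2 + \<tau> 2^2 = 3" "\<sigma> 4^2 + \<tau> 3^2 = 3" "\<sigma> 0^2 + \<tau> 4^2 = 3"
  shows "(\<forall>j<5. \<sigma> j = phi \<and> \<tau> j = psi) \<or> (\<forall>j<5. \<sigma> j = psi \<and> \<tau> j = phi)"
proof -
  define u where "u j = \<sigma> j ^ 2" for j
  define v where "v j = \<tau> j ^ 2" for j
  have uv: "\<forall>j<5. u j * v j = 1" using p by (simp add: u_def v_def power_mult_distrib[symmetric])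
  have up: "\<forall>j<5. u j > 0"
  proof (intro allI impI)
    fix j :: nat assume "j < 5"
    then have "\<sigma> j \<noteq> 0" using p by force
    then show "u j > 0" by (simp add: u_def)
  qed
  have up5: "u 0 > 0" "u 1 > 0" "u 2 > 0" "u 3 > 0" "u 4 > 0" using up by simp_all
  have uv5: "u 0 * v 0 = 1" "u 1 * v 1 = 1" "u 2 * v 2 = 1" "u 3 * v 3 = 1" "u 4 * v 4 = 1" using uv by simp_all
  have e5: "u 1 + v 0 = 3" "u 2 + v 1 = 3" "u 3 + v 2 = 3" "u 4 + v 3 = 3" "u 0 + v 4 = 3"
    using e by (simp_all only: u_def v_def)
  note g = golden_u[OF up5 uv5 e5]
  have all: "\<forall>j<5. \<sigma> j ^ 2 = u 0" using g by (intro all5) (simp_all add: u_def)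
  have key: "\<forall>j<5. \<sigma> j = r \<and> \<tau> j = 1 / r" if r: "r > 0" "u 0 = r^2" for r
  proof (intro allI impI)
    fix j :: nat assume j: "j < 5"
    have "\<sigma> j ^ 2 = r ^ 2" using all j r by simp
    then have sj: "\<sigma> j = r" using nn j r power2_eq_iff_nonneg[of "\<sigma> j" r] by simp
    have "\<sigma> j * \<tau> j = 1" using p j by simp
    then have "\<tau> j = 1 / r" using sj r by (simp add: field_simps)
    then show "\<sigma> j = r \<and> \<tau> j = 1 / r" using sj by simp
  qed
  have ip: "1 / phi = psi" "1 / psi = phi" using phi_psi phi_pos psi_pos by (simp_all add: field_simps)
  from quad_roots[OF g(1)] show ?thesis
  proof
    assume "u 0 = phi^2"
    then show ?thesis using key[OF phi_pos] ip by simp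
  next
    assume "u 0 = psi^2"
    then show ?thesis using key[OF psi_pos] ip by simp
  qed
qed



lemma reindex5:
  assumes wd: "windowed 5 B w s t" and bb: "is_BBT 5 A 5 B" and img: "w ` {..<5} = {..<5}"
  shows "\<exists>\<sigma> \<tau>. (\<forall>j<5. \<sigma> j \<ge> 0 \<and> \<tau> j \<ge> 0)
    \<and> (\<forall>i<5. \<forall>i'<5. A i i' = (\<Sum>j<5. win j (\<sigma> j) (\<tau> j) i * win j (\<sigma> j) (\<tau> j) i'))
    \<and> (\<forall>l<5. s l = \<sigma> (w l) \<and> t l = \<tau> (w l))"
proof -
  have inj: "inj_on w {..<5}" using img by (intro eq_card_imp_inj_on) auto
  then have bw: "bij_betw w {..<5} {..<5}" using img by (simp add: bij_betw_def)
  define g where "g = inv_into {..<5} w"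
  have bg: "bij_betw g {..<5} {..<5}" unfolding g_def using bij_betw_inv_into[OF bw] .
  have gw: "\<And>l. l < 5 \<Longrightarrow> g (w l) = l" unfolding g_def using inj by (simp add: inv_into_f_f)
  have wg: "\<And>j. j < 5 \<Longrightarrow> w (g j) = j" unfolding g_def using img by (simp add: f_inv_into_f)
  have g5: "\<And>j. j < 5 \<Longrightarrow> g j < 5" using bg by (auto simp: bij_betw_def)
  define \<sigma> where "\<sigma> j = s (g j)" for j
  define \<tau> where "\<tau> j = t (g j)" for j
  have col: "\<And>i j. i < 5 \<Longrightarrow> j < 5 \<Longrightarrow> B i (g j) = win j (\<sigma> j) (\<tau> j) i"
    using wd g5 wg unfolding windowed_def \<sigma>_def \<tau>_def by metis
  have "(\<forall>j<5. \<sigma> j \<ge> 0 \<and> \<tau> j \<ge> 0)" using wd g5 unfolding windowed_def \<sigma>_def \<tau>_def by auto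
  moreover have "\<forall>i<5. \<forall>i'<5. A i i' = (\<Sum>j<5. win j (\<sigma> j) (\<tau> j) i * win j (\<sigma> j) (\<tau> j) i')"
  proof (intro allI impI)
    fix i i' :: nat assume ii: "i < 5" "i' < 5"
    have "(\<Sum>j<5. win j (\<sigma> j) (\<tau> j) i * win j (\<sigma> j) (\<tau> j) i') = (\<Sum>j<5. B i (g j) * B i' (g j))"
      using col ii by (intro sum.cong) auto
    also have "\<dots> = (\<Sum>l<5. B i l * B i' l)"
      using sum.reindex_bij_betw[OF bg, of "\<lambda>l. B i l * B i' l"] by simp
    also have "\<dots> = A i i'" using bb ii by (simp add: is_BBT_def)
    finally show "A i i' = (\<Sum>j<5. win j (\<sigma> j) (\<tau> j) i * win j (\<sigma> j) (\<tau> j) i')" by simp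
  qed
  moreover have "\<forall>l<5. s l = \<sigma> (w l) \<and> t l = \<tau> (w l)" using gw by (simp add: \<sigma>_def \<tau>_def)
  ultimately show ?thesis by blast
qed

lemma diag_eval:
  assumes "\<forall>i<5. \<forall>i'<5. A i i' = (\<Sum>j<5. win j (\<sigma> j) (\<tau> j) i * win j (\<sigma> j) (\<tau> j) i')"
  shows "A 0 2 = \<sigma> 0 * \<tau> 0" "A 1 3 = \<sigma> 1 * \<tau> 1" "A 2 4 = \<sigma> 2 * \<tau> 2" "A 3 0 = \<sigma> 3 * \<tau> 3" "A 4 1 = \<sigma> 4 * \<tau> 4"
   "A 0 1 = \<sigma> 0 * (\<sigma> 0 + \<tau> 0) + (\<sigma> 4 + \<tau> 4) * \<tau> 4"
   "A 1 2 = \<sigma> 1 * (\<sigma> 1 + \<tau> 1) + (\<sigma> 0 + \<tau> 0) * \<tau> 0"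
   "A 2 3 = \<sigma> 2 * (\<sigma> 2 + \<tau> 2) + (\<sigma> 1 + \<tau> 1) * \<tau> 1"
   "A 3 4 = \<sigma> 3 * (\<sigma> 3 + \<tau> 3) + (\<sigma> 2 + \<tau> 2) * \<tau> 2"
   "A 4 0 = \<sigma> 4 * (\<sigma> 4 + \<tau> 4) + (\<sigma> 3 + \<tau> 3) * \<tau> 3"
  using assms[rule_format, of 0 2] assms[rule_format, of 1 3] assms[rule_format, of 2 4]
    assms[rule_format, of 3 0] assms[rule_format, of 4 1] assms[rule_format, of 0 1]
    assms[rule_format, of 1 2] assms[rule_format, of 2 3] assms[rule_format, of 3 4] assms[rule_format, of 4 0]
  by (simp_all add: sum5 win_def)

lemma lin_indep_det:
  assumes "i < n" "i' < n" "B i j * B i' j' \<noteq> B i' j * B i j'"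
  shows "cols_lin_indep n B j j'"
  unfolding cols_lin_indep_def
proof (intro allI impI)
  fix a b assume h: "\<forall>i<n. a * B i j + b * B i j' = 0"
  have e1: "a * B i j + b * B i j' = 0" and e2: "a * B i' j + b * B i' j' = 0" using h assms by auto
  have "a * (B i j * B i' j' - B i' j * B i j') = B i' j' * (a * B i j + b * B i j') - B i j' * (a * B i' j + b * B i' j')"
    by (simp add: algebra_simps)
  then have "a * (B i j * B i' j' - B i' j * B i j') = 0" using e1 e2 by simp
  then have a0: "a = 0" using assms(3) by simp
  have "b * (B i j * B i' j' - B i' j * B i j') = B i j * (a * B i' j + b * B i' j') - B i' j * (a * B i j + b * B i j')"
    by (simp add: algebra_simps)
  then have "b * (B i j * B i' j' - B i' j * B i j') = 0" using e1 e2 by simp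
  then have "b = 0" using assms(3) by simp
  with a0 show "a = 0 \<and> b = 0" by simp
qed

lemma win_lin_indep:
  assumes wd: "windowed k B w s t" and l: "l < k" "l' < k"
    and c: "(w l \<noteq> w l' \<and> s l \<noteq> 0 \<and> s l' \<noteq> 0) \<or> (w l = w l' \<and> s l * t l' \<noteq> t l * s l')"
  shows "cols_lin_indep 5 B l l'"
proof -
  have w: "w l < 5" "w l' < 5" using wd l unfolding windowed_def by auto
  have B: "\<And>i. i < 5 \<Longrightarrow> B i l = win (w l) (s l) (t l) i" "\<And>i. i < 5 \<Longrightarrow> B i l' = win (w l') (s l') (t l') i"
    using wd l unfolding windowed_def by auto
  from c show ?thesis
  proof
    assume h: "w l \<noteq> w l' \<and> s l \<noteq> 0 \<and> s l' \<noteq> 0"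
    have t1: "B (w l) l = s l" using B(1)[OF w(1)] by (simp add: win_def)
    have t2: "B (w l') l' = s l'" using B(2)[OF w(2)] by (simp add: win_def)
    have cr: "B (w l') l * B (w l) l' = 0"
      using B(1)[OF w(2)] B(2)[OF w(1)] win_cross[OF w(1) w(2), of "s l" "t l" "s l'" "t l'"] h by simp
    have "B (w l) l * B (w l') l' \<noteq> B (w l') l * B (w l) l'"
      unfolding t1 t2 cr using h by simp
    then show ?thesis using w by (intro lin_indep_det) auto
  next
    assume h: "w l = w l' \<and> s l * t l' \<noteq> t l * s l'"
    have m: "(w l + 2) mod 5 < 5" by simp
    have ne: "(w l + 2) mod 5 \<noteq> w l" "(w l + 2) mod 5 \<noteq> Suc (w l) mod 5" "(w l + 2) mod 5 = Suc (Suc (w l)) mod 5"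
      using w less5_cases[OF w(1)] by auto
    have "B (w l) l * B ((w l + 2) mod 5) l' \<noteq> B ((w l + 2) mod 5) l * B (w l) l'"
      using h B(1)[OF w(1)] B(2)[OF w(1)] B(1)[OF m] B(2)[OF m] ne by (simp add: win_def)
    then show ?thesis using w m by (intro lin_indep_det) auto
  qed
qed



lemma cpe_intro: "p permutes {..<k} \<Longrightarrow> (\<forall>i<n. \<forall>j<k. C i j = B i (p j)) \<Longrightarrow> ((k,B),(k,C)) \<in> cp_equiv n"
  by (auto simp: cp_equiv_def)

lemma cpe_refl: "((k,B),(k,B)) \<in> cp_equiv n"
  by (rule cpe_intro[OF permutes_id]) simp

lemma cpe_sym: assumes "((k,B),(k',C)) \<in> cp_equiv n" shows "((k',C),(k,B)) \<in> cp_equiv n"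
proof -
  from assms obtain p where kk: "k = k'" and p: "p permutes {..<k}" and e: "\<forall>i<n. \<forall>j<k. C i j = B i (p j)"
    by (auto simp: cp_equiv_def)
  have "\<forall>i<n. \<forall>j<k. B i j = C i (inv p j)"
  proof (intro allI impI)
    fix i j assume ij: "i < n" "j < k"
    have "inv p j < k" using permutes_in_image[OF permutes_inv[OF p]] ij by simp
    then have "C i (inv p j) = B i (p (inv p j))" using e ij by simp
    also have "\<dots> = B i j" using permutes_inverses(1)[OF p] by simp
    finally show "B i j = C i (inv p j)" by simp
  qed
  then show ?thesis using cpe_intro[OF permutes_inv[OF p]] kk by simp
qed

lemma cpe_trans: assumes "((k,B),(k',C)) \<in> cp_equiv n" "((k',C),(k'',D)) \<in> cp_equiv n"
  shows "((k,B),(k'',D)) \<in> cp_equiv n"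
proof -
  from assms(1) obtain p where kk: "k = k'" and p: "p permutes {..<k}" and e: "\<forall>i<n. \<forall>j<k. C i j = B i (p j)"
    by (auto simp: cp_equiv_def)
  from assms(2) obtain q where kk': "k' = k''" and q: "q permutes {..<k'}" and e': "\<forall>i<n. \<forall>j<k'. D i j = C i (q j)"
    by (auto simp: cp_equiv_def)
  have pq: "p \<circ> q permutes {..<k}" using permutes_compose[OF _ p] q kk by simp
  have "\<forall>i<n. \<forall>j<k. D i j = B i ((p \<circ> q) j)"
  proof (intro allI impI)
    fix i j assume ij: "i < n" "j < k"
    have "q j < k" using permutes_in_image[OF q] ij kk by simp
    then show "D i j = B i ((p \<circ> q) j)" using e e' ij kk by simp
  qed
  then show ?thesis using cpe_intro[OF pq] kk kk' by simp
qed

lemma cpe_equiv: "equiv UNIV (cp_equiv n)"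
proof (rule equivI)
  show "refl (cp_equiv n)"
  proof (rule refl_onI)
    fix x :: "nat \<times> (nat \<Rightarrow> nat \<Rightarrow> real)"
    show "(x, x) \<in> cp_equiv n" using cpe_refl[of "fst x" "snd x" n] by simp
  qed
  show "sym (cp_equiv n)"
  proof (rule symI)
    fix a b assume "(a, b) \<in> cp_equiv n"
    then show "(b, a) \<in> cp_equiv n" using cpe_sym[of "fst a" "snd a" "fst b" "snd b" n] by simp
  qed
  show "trans (cp_equiv n)"
  proof (rule transI)
    fix a b c assume "(a, b) \<in> cp_equiv n" "(b, c) \<in> cp_equiv n"
    then show "(a, c) \<in> cp_equiv n"
      using cpe_trans[of "fst a" "snd a" "fst b" "snd b" n "fst c" "snd c"] by simp
  qed
qed simp

lemma ext_permutes:
  assumes "w ` {..<5} = {..<(5::nat)}"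
  shows "(\<lambda>j. if j < 5 then w j else j) permutes {..<5}"
proof -
  have inj: "inj_on w {..<5}" using assms by (intro eq_card_imp_inj_on) auto
  then have bw: "bij_betw w {..<5} {..<5}" using assms by (simp add: bij_betw_def)
  have "bij_betw (\<lambda>j. if j < 5 then w j else j) {..<5} {..<5}"
    using bw by (rule bij_betw_cong[THEN iffD1, rotated]) auto
  then show ?thesis by (rule bij_imp_permutes) auto
qed

lemma const_gram:
  assumes "i < 5" "i' < 5"
  shows "(\<Sum>j<5. win j a b i * win j a b i') = circ5 (a^2 + (a+b)^2 + b^2) (a*(a+b) + (a+b)*b) (a*b) i i'"
  using less5_cases[OF assms(1)] less5_cases[OF assms(2)]
  by (elim disjE; simp add: sum5 win_def circ5_def power2_eq_square algebra_simps)

lemma W5sq_win: assumes "i < 5" "j < 5" shows "W5sq i j = win j 1 1 i"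
  using less5_cases[OF assms(1)] less5_cases[OF assms(2)]
  by (elim disjE; simp add: W5sq_def W5_def sum5 win_def)



lemma diag_prod:
  assumes g: "\<forall>i<5. \<forall>i'<5. A i i' = (\<Sum>j<5. win j (\<sigma> j) (\<tau> j) i * win j (\<sigma> j) (\<tau> j) i')"
    and c: "A 0 2 = c" "A 1 3 = c" "A 2 4 = c" "A 3 0 = c" "A 4 1 = c"
  shows "\<forall>j<5. \<sigma> j * \<tau> j = c"
proof -
  note d = diag_eval[OF g]
  have "\<sigma> 0 * \<tau> 0 = c" "\<sigma> 1 * \<tau> 1 = c" "\<sigma> 2 * \<tau> 2 = c" "\<sigma> 3 * \<tau> 3 = c" "\<sigma> 4 * \<tau> 4 = c"
    using d(1-5) c by simp_all
  then show ?thesis by (intro all5)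
qed

lemma circ_d2: "\<forall>j<5. circ5 d a b j ((j+2) mod 5) = b"
  by (intro all5) (simp_all add: circ5_def)

lemma circ_nz: "b \<noteq> 0 \<Longrightarrow> \<forall>j<5. circ5 d a b j ((j+2) mod 5) \<noteq> 0"
  using circ_d2 by simp

lemma sq_diff_sum: "(\<Sum>l<k. (s l - t l)^2) = (\<Sum>l<k. (s l + t l)^2) - 4 * (\<Sum>l<k. s l * (t l::real))"
proof -
  have "(\<Sum>l<k. (s l - t l)^2) = (\<Sum>l<k. (s l + t l)^2 - 4 * (s l * t l))"
    by (intro sum.cong) (simp_all add: power2_eq_square algebra_simps)
  then show ?thesis by (simp add: sum_subtractf sum_distrib_left)
qed

lemma Ap_class:
  assumes F: "(k,B) \<in> cp_factorizations 5 (circ5 6 4 1)"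
  shows "((5, W5sq), (k,B)) \<in> cp_equiv 5"
proof -
  let ?A = "circ5 6 4 1"
  have nn: "nonneg_mat 5 k B" and bb: "is_BBT 5 ?A k B"
    and li: "\<forall>j<k. \<forall>j'<k. j \<noteq> j' \<longrightarrow> cols_lin_indep 5 B j j'"
    using F by (auto simp: cp_factorizations_def)
  have "(\<Sum>l<k. hq (\<lambda>i. B i l)) = 0" using hq_sum[OF bb] by (simp add: circ5_def)
  then obtain w s t where wd: "windowed k B w s t" using horn_windows[OF nn] by blast
  have nz: "\<forall>i<5. ?A i ((i+2) mod 5) \<noteq> 0" by (rule circ_nz) simp
  note wa = windows_all[OF wd bb nz]
  have s1: "(\<Sum>i<5. ?A i ((i+1) mod 5)) = 20" by (simp add: sum5 circ5_def)
  have s2: "(\<Sum>i<5. ?A i ((i+2) mod 5)) = 5" by (simp add: sum5 circ5_def)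
  have "(\<Sum>l<k. (s l - t l)^2) = 0"
    using sum_swap_adj[OF wd bb] s1 s2 sq_diff_sum[of s t k] by simp
  then have st: "\<forall>l<k. s l = t l"
    using sum_nonneg_eq_0_iff[of "{..<k}" "\<lambda>l. (s l - t l)^2"] by simp
  have inj: "inj_on w {..<k}"
  proof (rule inj_onI, rule ccontr)
    fix l l' assume l: "l \<in> {..<k}" "l' \<in> {..<k}" "w l = w l'" "l \<noteq> l'"
    have ci: "cols_lin_indep 5 B l l'" using li l by auto
    have Bl: "\<And>i. i < 5 \<Longrightarrow> B i l = s l * win (w l) 1 1 i"
      using wd l st unfolding windowed_def by (simp add: win_scale)
    have Bl': "\<And>i. i < 5 \<Longrightarrow> B i l' = s l' * win (w l) 1 1 i"
      using wd l st unfolding windowed_def by (simp add: win_scale)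
    have "\<forall>i<5. s l' * B i l + (- s l) * B i l' = 0" using Bl Bl' by simp
    then have z: "s l' = 0 \<and> s l = 0" using ci[unfolded cols_lin_indep_def, rule_format, of "s l'" "- s l"] by simp
    have "\<forall>i<5. 1 * B i l + 0 * B i l' = 0" using Bl z by simp
    then show False using ci[unfolded cols_lin_indep_def, rule_format, of 1 0] by simp
  qed
  have k5: "k = 5"
  proof -
    have "card (w ` {..<k}) = card {..<k}" using card_image[OF inj] .
    then show ?thesis using wa(1) by simp
  qed
  have wd5: "windowed 5 B w s t" and bb5: "is_BBT 5 ?A 5 B" and img: "w ` {..<5} = {..<5}"
    using wd bb wa(1) k5 by simp_all
  obtain \<sigma> \<tau> where nst: "\<forall>j<5. \<sigma> j \<ge> 0 \<and> \<tau> j \<ge> 0"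
    and g: "\<forall>i<5. \<forall>i'<5. ?A i i' = (\<Sum>j<5. win j (\<sigma> j) (\<tau> j) i * win j (\<sigma> j) (\<tau> j) i')"
    and sw: "\<forall>l<5. s l = \<sigma> (w l) \<and> t l = \<tau> (w l)"
    using reindex5[OF wd5 bb5 img] by blast
  have pr: "\<forall>j<5. \<sigma> j * \<tau> j = 1" by (rule diag_prod[OF g]) (simp_all add: circ5_def)
  have one: "\<forall>l<5. s l = 1 \<and> t l = 1"
  proof (intro allI impI)
    fix l :: nat assume l: "l < 5"
    have wl: "w l < 5" using wd5 l unfolding windowed_def by simp
    have "s l * t l = 1" using sw pr wl l by simp
    moreover have "s l = t l" using st l k5 by simp
    moreover have "s l \<ge> 0" using wd5 l unfolding windowed_def by simp
    ultimately have "s l * s l = 1" "s l \<ge> 0" by simp_all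
    then have "s l = 1" by (metis abs_of_nonneg real_sqrt_abs2 real_sqrt_one power2_eq_square)
    then show "s l = 1 \<and> t l = 1" using \<open>s l = t l\<close> by simp
  qed
  have "\<forall>i<5. \<forall>j<5. B i j = W5sq i ((\<lambda>j. if j < 5 then w j else j) j)"
  proof (intro allI impI)
    fix i j :: nat assume ij: "i < 5" "j < 5"
    have "w j < 5" using wd5 ij unfolding windowed_def by simp
    then show "B i j = W5sq i ((\<lambda>j. if j < 5 then w j else j) j)"
      using wd5 ij one W5sq_win[OF ij(1)] unfolding windowed_def by simp
  qed
  then show ?thesis using cpe_intro[OF ext_permutes[OF img]] k5 by simp
qed



lemma sum10: "(\<Sum>l<10::nat. f l) = (\<Sum>l<5. f l) + (\<Sum>l<5. f (l+5)) + (0::real)"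
  by (simp add: eval_nat_numeral ac_simps)

lemma win_eq:
  assumes a: "a < 5" "a' < 5" and st: "s > 0" "t > 0"
    and e: "\<forall>i<5. win a s t i = win a' s' t' i"
  shows "a = a' \<and> s = s' \<and> t = t'"
  using less5_cases[OF a(1)] less5_cases[OF a(2)] e[rule_format, of 0] e[rule_format, of 1]
    e[rule_format, of 2] e[rule_format, of 3] e[rule_format, of 4] st
  by (elim disjE; simp add: win_def)

definition cmat :: "real \<Rightarrow> real \<Rightarrow> nat \<Rightarrow> nat \<Rightarrow> real" where
  "cmat a b i j = (if i < 5 \<and> j < 5 then win j a b i else 0)"

lemma cmat_windowed: "a \<ge> 0 \<Longrightarrow> b \<ge> 0 \<Longrightarrow> windowed 5 (cmat a b) (\<lambda>l. l) (\<lambda>_. a) (\<lambda>_. b)"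
  by (auto simp: windowed_def cmat_def)

lemma cmat_fact:
  assumes ab: "a > 0" "b > 0"
  shows "(5, cmat a b) \<in> cp_factorizations 5 (circ5 (a^2 + (a+b)^2 + b^2) (a*(a+b) + (a+b)*b) (a*b))"
proof -
  have wd: "windowed 5 (cmat a b) (\<lambda>l. l) (\<lambda>_. a) (\<lambda>_. b)" using ab cmat_windowed by simp
  have nn: "nonneg_mat 5 5 (cmat a b)"
    using wd ab unfolding nonneg_mat_def windowed_def by (auto simp: win_def)
  have bb: "is_BBT 5 (circ5 (a^2 + (a+b)^2 + b^2) (a*(a+b) + (a+b)*b) (a*b)) 5 (cmat a b)"
    unfolding is_BBT_def
  proof (intro allI impI)
    fix i j :: nat assume ij: "i < 5" "j < 5"
    have "(\<Sum>l<5. cmat a b i l * cmat a b j l) = (\<Sum>l<5. win l a b i * win l a b j)"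
      using ij by (intro sum.cong) (auto simp: cmat_def)
    then show "circ5 (a^2 + (a+b)^2 + b^2) (a*(a+b) + (a+b)*b) (a*b) i j = (\<Sum>l<5. cmat a b i l * cmat a b j l)"
      using const_gram[OF ij] by simp
  qed
  have li: "\<forall>j<5. \<forall>j'<5. j \<noteq> j' \<longrightarrow> cols_lin_indep 5 (cmat a b) j j'"
    using win_lin_indep[OF wd] ab by auto
  have z: "\<forall>i j. \<not> (i < 5 \<and> j < 5) \<longrightarrow> cmat a b i j = 0" by (auto simp: cmat_def)
  show ?thesis using nn bb li z by (simp add: cp_factorizations_def)
qed

lemma W5sq_cmat: "W5sq = cmat 1 1"
proof (intro ext)
  fix i j
  show "W5sq i j = cmat 1 1 i j"
  proof (cases "i < 5 \<and> j < 5")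
    case True then show ?thesis using W5sq_win[of i j] by (simp add: cmat_def)
  next
    case False then show ?thesis unfolding cmat_def W5sq_def by auto
  qed
qed

lemma num1: "phi^2 + (phi+psi)^2 + psi^2 = 8" "phi*(phi+psi) + (phi+psi)*psi = 5" "phi*psi = 1"
  "psi^2 + (psi+phi)^2 + phi^2 = 8" "psi*(psi+phi) + (psi+phi)*phi = 5" "psi*phi = 1"
proof -
  have a: "phi^2 + psi^2 = 3" using phi_sq psi_sq by simp
  have b: "(phi+psi)^2 = 5" using phi_plus_psi by simp
  have c: "phi*(phi+psi) + (phi+psi)*psi = (phi+psi)^2" by (simp add: power2_eq_square algebra_simps)
  show "phi^2 + (phi+psi)^2 + psi^2 = 8" "phi*(phi+psi) + (phi+psi)*psi = 5" "phi*psi = 1"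
    "psi^2 + (psi+phi)^2 + phi^2 = 8" "psi*(psi+phi) + (psi+phi)*phi = 5" "psi*phi = 1"
    using a b c phi_psi by (simp_all add: ac_simps)
qed

lemma F1_fact: "(5, cmat phi psi) \<in> cp_factorizations 5 (circ5 8 5 1)"
  using cmat_fact[OF phi_pos psi_pos] num1 by simp
lemma F2_fact: "(5, cmat psi phi) \<in> cp_factorizations 5 (circ5 8 5 1)"
  using cmat_fact[OF psi_pos phi_pos] num1 by simp
lemma W_fact: "(5, W5sq) \<in> cp_factorizations 5 (circ5 6 4 1)"
  using cmat_fact[of 1 1] unfolding W5sq_cmat by (simp add: power2_eq_square)



lemma A_windows:
  assumes nn: "nonneg_mat 5 k B" and bb: "is_BBT 5 (circ5 8 5 1) k B"
  shows "\<exists>w s t. windowed k B w s t \<and> w ` {..<k} = {..<5} \<and> 5 \<le> k"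
proof -
  have "(\<Sum>l<k. hq (\<lambda>i. B i l)) = 0" using hq_sum[OF bb] by (simp add: circ5_def)
  then obtain w s t where wd: "windowed k B w s t" using horn_windows[OF nn] by blast
  have nz: "\<forall>i<5. circ5 8 5 1 i ((i+2) mod 5) \<noteq> 0" by (rule circ_nz) simp
  note wa = windows_all[OF wd bb nz]
  then show ?thesis using wd by blast
qed

lemma A_rank: "cp_rank 5 (circ5 8 5 1) = 5"
  unfolding cp_rank_def
proof (rule Least_equality)
  show "\<exists>B. nonneg_mat 5 5 B \<and> is_BBT 5 (circ5 8 5 1) 5 B"
    using F1_fact by (auto simp: cp_factorizations_def)
next
  fix k assume "\<exists>B. nonneg_mat 5 k B \<and> is_BBT 5 (circ5 8 5 1) k B"
  then show "5 \<le> k" using A_windows by blast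
qed

lemma adj_eq: fixes x y z w :: real
  assumes "x*(x+y) + (z+w)*w = 5" "x*y = 1" "z*w = 1" shows "x^2 + w^2 = 3"
proof -
  have "x*(x+y) + (z+w)*w = x^2 + w^2 + x*y + z*w" by (simp add: power2_eq_square algebra_simps)
  then show ?thesis using assms by linarith
qed

lemma A_min_class:
  assumes nn: "nonneg_mat 5 5 B" and bb: "is_BBT 5 (circ5 8 5 1) 5 B"
  shows "((5, cmat phi psi), (5, B)) \<in> cp_equiv 5 \<or> ((5, cmat psi phi), (5, B)) \<in> cp_equiv 5"
proof -
  let ?A = "circ5 8 5 1"
  obtain w s t where wd: "windowed 5 B w s t" and img: "w ` {..<5} = {..<5}"
    using A_windows[OF nn bb] by blast
  obtain \<sigma> \<tau> where nst: "\<forall>j<5. \<sigma> j \<ge> 0 \<and> \<tau> j \<ge> 0"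
    and g: "\<forall>i<5. \<forall>i'<5. ?A i i' = (\<Sum>j<5. win j (\<sigma> j) (\<tau> j) i * win j (\<sigma> j) (\<tau> j) i')"
    and sw: "\<forall>l<5. s l = \<sigma> (w l) \<and> t l = \<tau> (w l)"
    using reindex5[OF wd bb img] by blast
  have pr: "\<forall>j<5. \<sigma> j * \<tau> j = 1" by (rule diag_prod[OF g]) (simp_all add: circ5_def)
  have p: "\<sigma> 0 * \<tau> 0 = 1" "\<sigma> 1 * \<tau> 1 = 1" "\<sigma> 2 * \<tau> 2 = 1" "\<sigma> 3 * \<tau> 3 = 1" "\<sigma> 4 * \<tau> 4 = 1"
    using pr by simp_all
  note d = diag_eval[OF g]
  have v: "?A 0 1 = 5" "?A 1 2 = 5" "?A 2 3 = 5" "?A 3 4 = 5" "?A 4 0 = 5" by (simp_all add: circ5_def)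
  have e: "\<sigma> 1^2 + \<tau> 0^2 = 3" "\<sigma> 2^2 + \<tau> 1^2 = 3" "\<sigma> 3^2 + \<tau> 2^2 = 3" "\<sigma> 4^2 + \<tau> 3^2 = 3" "\<sigma> 0^2 + \<tau> 4^2 = 3"
    using adj_eq[of "\<sigma> 1" "\<tau> 1" "\<sigma> 0" "\<tau> 0"] adj_eq[of "\<sigma> 2" "\<tau> 2" "\<sigma> 1" "\<tau> 1"]
      adj_eq[of "\<sigma> 3" "\<tau> 3" "\<sigma> 2" "\<tau> 2"] adj_eq[of "\<sigma> 4" "\<tau> 4" "\<sigma> 3" "\<tau> 3"]
      adj_eq[of "\<sigma> 0" "\<tau> 0" "\<sigma> 4" "\<tau> 4"] d(6-10) v p by simp_all
  have perm: "(\<lambda>j. if j < 5 then w j else j) permutes {..<5}" using ext_permutes[OF img] .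
  have w5: "\<And>l. l < 5 \<Longrightarrow> w l < 5" using wd unfolding windowed_def by simp
  have rel: "((5, cmat a b), (5, B)) \<in> cp_equiv 5" if ab: "\<forall>j<5. \<sigma> j = a \<and> \<tau> j = b" for a b
  proof -
    have "\<forall>i<5. \<forall>j<5. B i j = cmat a b i ((\<lambda>j. if j < 5 then w j else j) j)"
    proof (intro allI impI)
      fix i j :: nat assume ij: "i < 5" "j < 5"
      have "B i j = win (w j) (s j) (t j) i" using wd ij unfolding windowed_def by simp
      also have "\<dots> = win (w j) a b i" using sw ab ij w5 by simp
      finally show "B i j = cmat a b i ((\<lambda>j. if j < 5 then w j else j) j)"
        using ij w5 by (simp add: cmat_def)
    qed
    then show ?thesis using cpe_intro[OF perm] by simp
  qed
  from golden[OF nst pr e] show ?thesis using rel by blast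
qed

lemma F1_F2_distinct: "((5, cmat phi psi), (5, cmat psi phi)) \<notin> cp_equiv 5"
proof
  assume "((5, cmat phi psi), (5, cmat psi phi)) \<in> cp_equiv 5"
  then obtain p where p: "p permutes {..<5}" and e: "\<forall>i<5. \<forall>j<5. cmat psi phi i j = cmat phi psi i (p j)"
    by (auto simp: cp_equiv_def)
  have p0: "p 0 < 5" using permutes_in_image[OF p] by simp
  have "\<forall>i<5. win 0 psi phi i = win (p 0) phi psi i" using e p0 by (auto simp: cmat_def)
  moreover have z: "(0::nat) < 5" by simp
  note win_eq[OF z p0 psi_pos phi_pos]
  ultimately have "0 = p 0 \<and> psi = phi \<and> phi = psi" by blast
  then have "psi = phi" by blast
  then show False using phi_ne_psi by argo
qed



definition G :: "real \<Rightarrow> nat \<Rightarrow> nat \<Rightarrow> real" where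
 "G x i l = (if l < 5 then sqrt x * cmat phi psi i l
     else if l < 10 then sqrt (1 - x) * cmat psi phi i (l - 5) else 0)"

definition Gw :: "nat \<Rightarrow> nat" where "Gw l = (if l < 5 then l else l - 5)"
definition Gs :: "real \<Rightarrow> nat \<Rightarrow> real" where "Gs x l = (if l < 5 then sqrt x * phi else sqrt (1-x) * psi)"
definition Gt :: "real \<Rightarrow> nat \<Rightarrow> real" where "Gt x l = (if l < 5 then sqrt x * psi else sqrt (1-x) * phi)"

lemma G_windowed: assumes "0 < x" "x < 1" shows "windowed 10 (G x) Gw (Gs x) (Gt x)"
  unfolding windowed_def
proof (intro allI impI)
  fix l :: nat assume l: "l < 10"
  have nn: "Gs x l \<ge> 0" "Gt x l \<ge> 0" using assms phi_pos psi_pos by (simp_all add: Gs_def Gt_def)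
  have "\<forall>i<5. G x i l = win (Gw l) (Gs x l) (Gt x l) i"
  proof (intro allI impI)
    fix i :: nat assume i: "i < 5"
    show "G x i l = win (Gw l) (Gs x l) (Gt x l) i"
    proof (cases "l < 5")
      case True then show ?thesis using i by (simp add: G_def Gw_def Gs_def Gt_def cmat_def win_scale)
    next
      case False
      then have "l - 5 < 5" using l by simp
      then show ?thesis using i l False by (simp add: G_def Gw_def Gs_def Gt_def cmat_def win_scale)
    qed
  qed
  moreover have "Gw l < 5" using l unfolding Gw_def by presburger
  ultimately show "Gw l < 5 \<and> 0 \<le> Gs x l \<and> 0 \<le> Gt x l \<and> (\<forall>i<5. G x i l = win (Gw l) (Gs x l) (Gt x l) i)"
    using nn by simp
qed

lemma cmat_nonneg: "a \<ge> 0 \<Longrightarrow> b \<ge> 0 \<Longrightarrow> cmat a b i j \<ge> 0"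
  by (simp add: cmat_def win_def)

lemma phi_sq_ne: "phi * phi \<noteq> psi * psi"
proof
  assume "phi * phi = psi * psi"
  then have "phi^2 = psi^2" by (simp add: power2_eq_square)
  then have "phi = psi" using phi_pos psi_pos by (simp add: power2_eq_iff_nonneg)
  then show False using phi_ne_psi by argo
qed

lemma G_fact: assumes x: "0 < x" "x < 1" shows "(10, G x) \<in> cp_factorizations 5 (circ5 8 5 1)"
proof -
  let ?A = "circ5 8 5 1"
  note wd = G_windowed[OF x]
  have nn: "nonneg_mat 5 10 (G x)"
    unfolding nonneg_mat_def G_def using x phi_pos psi_pos by (auto intro!: cmat_nonneg mult_nonneg_nonneg)
  have b1: "is_BBT 5 ?A 5 (cmat phi psi)" and b2: "is_BBT 5 ?A 5 (cmat psi phi)"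
    using F1_fact F2_fact by (simp_all add: cp_factorizations_def)
  have bb: "is_BBT 5 ?A 10 (G x)"
    unfolding is_BBT_def
  proof (intro allI impI)
    fix i j :: nat assume ij: "i < 5" "j < 5"
    have sx: "sqrt x * sqrt x = x" "sqrt (1-x) * sqrt (1-x) = 1 - x" using x by simp_all
    have "(\<Sum>l<10. G x i l * G x j l) = (\<Sum>l<5. G x i l * G x j l) + (\<Sum>l<5. G x i (l+5) * G x j (l+5)) + 0"
      by (rule sum10)
    also have "(\<Sum>l<5. G x i l * G x j l) = x * (\<Sum>l<5. cmat phi psi i l * cmat phi psi j l)"
      unfolding sum_distrib_left
    proof (rule sum.cong)
      fix l assume "l \<in> {..<5::nat}"
      then have "G x i l * G x j l = (sqrt x * sqrt x) * (cmat phi psi i l * cmat phi psi j l)"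
        by (simp add: G_def algebra_simps)
      then show "G x i l * G x j l = x * (cmat phi psi i l * cmat phi psi j l)" using sx by simp
    qed simp
    also have "(\<Sum>l<5. G x i (l+5) * G x j (l+5)) = (1-x) * (\<Sum>l<5. cmat psi phi i l * cmat psi phi j l)"
      unfolding sum_distrib_left
    proof (rule sum.cong)
      fix l assume "l \<in> {..<5::nat}"
      then have "G x i (l+5) * G x j (l+5) = (sqrt (1-x) * sqrt (1-x)) * (cmat psi phi i l * cmat psi phi j l)"
        by (simp add: G_def algebra_simps)
      then show "G x i (l+5) * G x j (l+5) = (1-x) * (cmat psi phi i l * cmat psi phi j l)" using sx by simp
    qed simp
    finally show "?A i j = (\<Sum>l<10. G x i l * G x j l)"
      using b1 b2 ij unfolding is_BBT_def by (simp add: algebra_simps)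
  qed
  have li: "\<forall>j<10. \<forall>j'<10. j \<noteq> j' \<longrightarrow> cols_lin_indep 5 (G x) j j'"
  proof (intro allI impI)
    fix l l' :: nat assume l: "l < 10" "l' < 10" "l \<noteq> l'"
    have sp: "sqrt x > 0" "sqrt (1-x) > 0" using x by simp_all
    have pos: "Gs x l \<noteq> 0" "Gs x l' \<noteq> 0" using sp phi_pos psi_pos by (simp_all add: Gs_def)
    have ne: "Gw l = Gw l' \<Longrightarrow> Gs x l * Gt x l' \<noteq> Gt x l * Gs x l'"
    proof -
      assume "Gw l = Gw l'"
      then have c: "(l < 5 \<and> \<not> l' < 5) \<or> (\<not> l < 5 \<and> l' < 5)" using l by (auto simp: Gw_def split: if_splits)
      have m: "sqrt x * sqrt (1-x) \<noteq> 0" using sp by simp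
      have "(sqrt x * phi) * (sqrt (1-x) * phi) \<noteq> (sqrt x * psi) * (sqrt (1-x) * psi)"
      proof
        assume "(sqrt x * phi) * (sqrt (1-x) * phi) = (sqrt x * psi) * (sqrt (1-x) * psi)"
        then have "(sqrt x * sqrt (1-x)) * (phi * phi) = (sqrt x * sqrt (1-x)) * (psi * psi)"
          by (simp add: algebra_simps)
        then show False using m phi_sq_ne by simp
      qed
      then show "Gs x l * Gt x l' \<noteq> Gt x l * Gs x l'"
        using c by (auto simp: Gs_def Gt_def algebra_simps)
    qed
    show "cols_lin_indep 5 (G x) l l'"
      by (rule win_lin_indep[OF wd l(1) l(2)]) (use pos ne in blast)
  qed
  have z: "\<forall>i j. \<not> (i < 5 \<and> j < 10) \<longrightarrow> G x i j = 0" by (auto simp: G_def cmat_def)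
  show ?thesis using nn bb li z by (simp add: cp_factorizations_def)
qed



lemma G_inj:
  assumes x: "0 < x" "x < 1" and y: "0 < y" "y < 1" and r: "((10, G x), (10, G y)) \<in> cp_equiv 5"
  shows "x = y"
proof -
  from r obtain p where p: "p permutes {..<10}" and e: "\<forall>i<5. \<forall>j<10. G y i j = G x i (p j)"
    by (auto simp: cp_equiv_def)
  have p0: "p 0 < 10" using permutes_in_image[OF p] by simp
  note wd = G_windowed[OF x]
  have w0: "Gw (p 0) < 5" using wd p0 unfolding windowed_def by simp
  have sy: "sqrt y > 0" using y by simp
  have ew: "\<forall>i<5. win 0 (sqrt y * phi) (sqrt y * psi) i = win (Gw (p 0)) (Gs x (p 0)) (Gt x (p 0)) i"
  proof (intro allI impI)
    fix i :: nat assume i: "i < 5"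
    have "G y i 0 = win 0 (sqrt y * phi) (sqrt y * psi) i" by (simp add: G_def cmat_def i win_scale)
    moreover have "G x i (p 0) = win (Gw (p 0)) (Gs x (p 0)) (Gt x (p 0)) i" using wd p0 i unfolding windowed_def by simp
    ultimately show "win 0 (sqrt y * phi) (sqrt y * psi) i = win (Gw (p 0)) (Gs x (p 0)) (Gt x (p 0)) i"
      using e i by simp
  qed
  have z: "(0::nat) < 5" by simp
  have pp: "sqrt y * phi > 0" "sqrt y * psi > 0" using sy phi_pos psi_pos by simp_all
  note win_eq[OF z w0 pp ew]
  then have e1: "sqrt y * phi = Gs x (p 0)" and e2: "sqrt y * psi = Gt x (p 0)" by blast+
  show ?thesis
  proof (cases "p 0 < 5")
    case True
    then have "sqrt y * phi = sqrt x * phi" using e1 by (simp add: Gs_def)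
    then have "sqrt y = sqrt x" using phi_pos by simp
    then show ?thesis by simp
  next
    case False
    then have f1: "sqrt y * phi = sqrt (1-x) * psi" and f2: "sqrt y * psi = sqrt (1-x) * phi"
      using e1 e2 by (simp_all add: Gs_def Gt_def)
    have "sqrt y * (phi * phi) = sqrt (1-x) * (psi * phi)" using f1 by (metis mult.assoc)
    then have g1: "sqrt y * (phi * phi) = sqrt (1-x)" using num1(6) by simp
    have "sqrt y * (psi * psi) = sqrt (1-x) * (phi * psi)" using f2 by (metis mult.assoc)
    then have g2: "sqrt y * (psi * psi) = sqrt (1-x)" using phi_psi by simp
    have "sqrt y * (phi * phi) = sqrt y * (psi * psi)" using g1 g2 by simp
    then have "phi * phi = psi * psi" using sy by simp
    then show ?thesis using phi_sq_ne by blast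
  qed
qed

lemma A_infinite: "infinite (cp_factorizations 5 (circ5 8 5 1) // cp_equiv 5)"
proof
  let ?Q = "cp_factorizations 5 (circ5 8 5 1) // cp_equiv 5"
  let ?f = "\<lambda>x. cp_equiv 5 `` {(10, G x)}"
  assume fin: "finite ?Q"
  have sub: "?f ` {0<..<1} \<subseteq> ?Q"
    using G_fact by (auto intro!: quotientI)
  have inj: "inj_on ?f {0<..<1}"
  proof (rule inj_onI)
    fix x y :: real assume xy: "x \<in> {0<..<1}" "y \<in> {0<..<1}" "?f x = ?f y"
    then have "((10, G x), (10, G y)) \<in> cp_equiv 5"
      using equiv_class_eq_iff[OF cpe_equiv] by blast
    then show "x = y" using G_inj xy by auto
  qed
  have "finite {0<..<(1::real)}"
    using finite_imageD[OF finite_subset[OF sub fin] inj] .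
  then show False using infinite_Ioo[of "0::real" 1] by simp
qed

theorem mainTheorem10:
  shows "completely_positive 5 (circ5 8 5 1)
    \<and> card (minimal_cp_factorizations 5 (circ5 8 5 1) // cp_equiv 5) = 2
    \<and> infinite (cp_factorizations 5 (circ5 8 5 1) // cp_equiv 5)
    \<and> completely_positive 5 (circ5 6 4 1)
    \<and> cp_factorizations 5 (circ5 6 4 1) // cp_equiv 5
        = {cp_equiv 5 `` {(5, W5sq)}}"
proof -
  let ?r = "cp_equiv 5"
  have eqc: "\<And>a b. (a, b) \<in> ?r \<Longrightarrow> ?r `` {a} = ?r `` {b}"
    using equiv_class_eq[OF cpe_equiv] by blast
  have c1: "completely_positive 5 (circ5 8 5 1)"
    using F1_fact unfolding completely_positive_def cp_factorizations_def by (auto simp: circ5_def)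
  have c4: "completely_positive 5 (circ5 6 4 1)"
    using W_fact unfolding completely_positive_def cp_factorizations_def by (auto simp: circ5_def)
  let ?M = "minimal_cp_factorizations 5 (circ5 8 5 1)"
  have F1m: "(5, cmat phi psi) \<in> ?M" using F1_fact A_rank by (simp add: minimal_cp_factorizations_def)
  have F2m: "(5, cmat psi phi) \<in> ?M" using F2_fact A_rank by (simp add: minimal_cp_factorizations_def)
  have MQ: "?M // ?r = {?r `` {(5, cmat phi psi)}, ?r `` {(5, cmat psi phi)}}"
  proof
    show "?M // ?r \<subseteq> {?r `` {(5, cmat phi psi)}, ?r `` {(5, cmat psi phi)}}"
    proof
      fix X assume "X \<in> ?M // ?r"
      then obtain k B where kB: "(k, B) \<in> ?M" and X: "X = ?r `` {(k, B)}"
        by (auto elim!: quotientE)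
      then have k: "k = 5" and nn: "nonneg_mat 5 5 B" and bb: "is_BBT 5 (circ5 8 5 1) 5 B"
        using A_rank by (auto simp: minimal_cp_factorizations_def cp_factorizations_def)
      from A_min_class[OF nn bb] show "X \<in> {?r `` {(5, cmat phi psi)}, ?r `` {(5, cmat psi phi)}}"
      proof
        assume "((5, cmat phi psi), (5, B)) \<in> ?r"
        then have "?r `` {(5, cmat phi psi)} = X" using X k eqc by simp
        then show ?thesis by simp
      next
        assume "((5, cmat psi phi), (5, B)) \<in> ?r"
        then have "?r `` {(5, cmat psi phi)} = X" using X k eqc by simp
        then show ?thesis by simp
      qed
    qed
    show "{?r `` {(5, cmat phi psi)}, ?r `` {(5, cmat psi phi)}} \<subseteq> ?M // ?r"
      using F1m F2m by (auto intro: quotientI)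
  qed
  have ne: "?r `` {(5, cmat phi psi)} \<noteq> ?r `` {(5, cmat psi phi)}"
    using equiv_class_eq_iff[OF cpe_equiv] F1_F2_distinct by blast
  have c2: "card (?M // ?r) = 2" using MQ ne by simp
  have c5: "cp_factorizations 5 (circ5 6 4 1) // ?r = {?r `` {(5, W5sq)}}"
  proof
    show "cp_factorizations 5 (circ5 6 4 1) // ?r \<subseteq> {?r `` {(5, W5sq)}}"
    proof
      fix X assume "X \<in> cp_factorizations 5 (circ5 6 4 1) // ?r"
      then obtain k B where kB: "(k, B) \<in> cp_factorizations 5 (circ5 6 4 1)" and X: "X = ?r `` {(k, B)}"
        by (auto elim!: quotientE)
      have "?r `` {(5, W5sq)} = X" using Ap_class[OF kB] X eqc by simp
      then show "X \<in> {?r `` {(5, W5sq)}}" by simp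
    qed
    show "{?r `` {(5, W5sq)}} \<subseteq> cp_factorizations 5 (circ5 6 4 1) // ?r"
      using W_fact by (auto intro: quotientI)
  qed
  show ?thesis using c1 c2 A_infinite c4 c5 by blast
qed

end
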